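(* Let $\mathfrak I$ be a derivative-dependent value function. Then: (1) $\mathfrak I$ is unbiased; (2) $\mathfrak I$ satisfies (ModEC); (3) if $\mathfrak I$ is weakly chain-rule decomposable, then it is chain-rule decomposable; (4) if $\mathfrak I$ is weakly rank preserving, then it is rank preserving; (5) if $\mathfrak I$ satisfies (Dic) and (Dum), then it satisfies (Bound).
   Context: $X$ is a fixed finite set of variables. $\mathbb B(X)$ is the set of Boolean functions $\{0,1\}^X\to\{0,1\}$, combined pointwise by $\lor,\land$ (juxtaposition), $\oplus$, negation $\overline f$; a variable $x$ also denotes $\mathbf u\mapsto\mathbf u(x)$; $f\ge g$ is pointwise. $f_{x/c}$ is $f$ with $x$ fixed to $c$. $\mathrm{dep}(f)=\{x: f_{x/1}\ne f_{x/0}\}$; $f$ is monotone in $x$ if $f_{x/1}\ge f_{x/0}$. $f[x/s]=s f_{x/1}\lor\overline s f_{x/0}$; $\mathrm D_xf=f_{x/1}\oplus f_{x/0}$. Modularity: $f$ is modular in $g$ if $g$ is not constant and there are $\ell\in\mathbb B(X)$, $z\in X$ with $\mathrm{dep}(\ell)\cap\mathrm{dep}(g)=\emptyset$ and $f=\ell[z/g]$; monotonically modular if moreover $\ell$ is monotone in $z$. Then $f_{g/1}:=\ell_{z/1}$, $f_{g/0}:=\ell_{z/0}$ (well defined), and for a variable $w$, $f[g/w]:=w f_{g/1}\lor\overline w f_{g/0}$. A value function is a map $\mathfrak I:X\times\mathbb B(X)\to\mathbb R$. Properties (quantified over all $x,y\in X$, $f,g,h\in\mathbb B(X)$): (Bound)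 $0\le\mathfrak I_x(f)\le1$; (Dum) $\mathfrak I_x(f)=0$ if $x\notin\mathrm{dep}(f)$; (Dic) $\mathfrak I_x(x)=\mathfrak I_x(\overline x)=1$; (ModEC) $\mathfrak I_x(f)\ge\mathfrak I_x(h)$ whenever $f,h$ are monotonically modular in $g$, $f_{g/1}\ge h_{g/1}$, $h_{g/0}\ge f_{g/0}$, $x\in\mathrm{dep}(g)$; unbiased: $\mathfrak I_x(g)=\mathfrak I_x(\overline g)$; derivative dependent: $\mathrm D_xf\ge\mathrm D_xg\Rightarrow\mathfrak I_x(f)\ge\mathfrak I_x(g)$; rank preserving: for $f$ modular in $g$ and $x,y\in\mathrm{dep}(g)$, $\mathfrak I_x(g)\ge\mathfrak I_y(g)\Rightarrow\mathfrak I_x(f)\ge\mathfrak I_y(f)$; chain-rule decomposable: for $f$ modular in $g$ and $x\in\mathrm{dep}(g)$, $\mathfrak I_x(f)=\mathfrak I_x(g)\,\mathfrak I_{x_g}(f[g/x_g])$ for a variable $x_g\notin\mathrm{dep}(f)$. The weak variants require these only when $f$ is monotonically modular in $g$. *)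

theory Defs
  imports Main "HOL.Real"
begin

text \<open>Variables are the elements of a finite type 'x; assignments are 'x \<Rightarrow> bool
  (true = 1, false = 0); Boolean functions are maps from assignments to bool.\<close>

type_synonym 'x bfun = "('x \<Rightarrow> bool) \<Rightarrow> bool"

definition bvar :: "'x \<Rightarrow> 'x bfun" where
  "bvar x = (\<lambda>u. u x)"

definition bneg :: "'x bfun \<Rightarrow> 'x bfun" where
  "bneg f = (\<lambda>u. \<not> f u)"

definition bge :: "'x bfun \<Rightarrow> 'x bfun \<Rightarrow> bool" where
  "bge f g \<longleftrightarrow> (\<forall>u. g u \<longrightarrow> f u)"

definition restr :: "'x bfun \<Rightarrow> 'x \<Rightarrow> bool \<Rightarrow> 'x bfun" where
  "restr f x c = (\<lambda>u. f (u(x := c)))"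

definition dep :: "'x bfun \<Rightarrow> 'x set" where
  "dep f = {x. restr f x True \<noteq> restr f x False}"

definition monotone_in :: "'x bfun \<Rightarrow> 'x \<Rightarrow> bool" where
  "monotone_in f x \<longleftrightarrow> bge (restr f x True) (restr f x False)"

definition bsubst :: "'x bfun \<Rightarrow> 'x \<Rightarrow> 'x bfun \<Rightarrow> 'x bfun" where
  "bsubst f x s = (\<lambda>u. (s u \<and> restr f x True u) \<or> (\<not> s u \<and> restr f x False u))"

definition bderiv :: "'x \<Rightarrow> 'x bfun \<Rightarrow> 'x bfun" where
  "bderiv x f = (\<lambda>u. restr f x True u \<noteq> restr f x False u)"

definition bconst :: "'x bfun \<Rightarrow> bool" where
  "bconst g \<longleftrightarrow> (\<exists>c. g = (\<lambda>u. c))"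

definition modular_wit :: "'x bfun \<Rightarrow> 'x bfun \<Rightarrow> 'x bfun \<Rightarrow> 'x \<Rightarrow> bool" where
  "modular_wit f g l z \<longleftrightarrow> dep l \<inter> dep g = {} \<and> f = bsubst l z g"

definition modular :: "'x bfun \<Rightarrow> 'x bfun \<Rightarrow> bool" where
  "modular f g \<longleftrightarrow> \<not> bconst g \<and> (\<exists>l z. modular_wit f g l z)"

definition mono_modular :: "'x bfun \<Rightarrow> 'x bfun \<Rightarrow> bool" where
  "mono_modular f g \<longleftrightarrow> \<not> bconst g \<and> (\<exists>l z. modular_wit f g l z \<and> monotone_in l z)"

text \<open>f_{g/c} := l_{z/c} for any witness (well defined, as stated in the paper)\<close>
definition cof :: "'x bfun \<Rightarrow> 'x bfun \<Rightarrow> bool \<Rightarrow> 'x bfun" where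
  "cof f g c = (SOME h. \<exists>l z. modular_wit f g l z \<and> h = restr l z c)"

definition gsubst :: "'x bfun \<Rightarrow> 'x bfun \<Rightarrow> 'x \<Rightarrow> 'x bfun" where
  "gsubst f g w = (\<lambda>u. (u w \<and> cof f g True u) \<or> (\<not> u w \<and> cof f g False u))"

definition Bound :: "('x \<Rightarrow> 'x bfun \<Rightarrow> real) \<Rightarrow> bool" where
  "Bound I \<longleftrightarrow> (\<forall>x f. 0 \<le> I x f \<and> I x f \<le> 1)"

definition Dum :: "('x \<Rightarrow> 'x bfun \<Rightarrow> real) \<Rightarrow> bool" where
  "Dum I \<longleftrightarrow> (\<forall>x f. x \<notin> dep f \<longrightarrow> I x f = 0)"

definition Dic :: "('x \<Rightarrow> 'x bfun \<Rightarrow> real) \<Rightarrow> bool" where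
  "Dic I \<longleftrightarrow> (\<forall>x. I x (bvar x) = 1 \<and> I x (bneg (bvar x)) = 1)"

definition ModEC :: "('x \<Rightarrow> 'x bfun \<Rightarrow> real) \<Rightarrow> bool" where
  "ModEC I \<longleftrightarrow> (\<forall>x f g h. mono_modular f g \<and> mono_modular h g
      \<and> bge (cof f g True) (cof h g True) \<and> bge (cof h g False) (cof f g False)
      \<and> x \<in> dep g \<longrightarrow> I x f \<ge> I x h)"

definition unbiased :: "('x \<Rightarrow> 'x bfun \<Rightarrow> real) \<Rightarrow> bool" where
  "unbiased I \<longleftrightarrow> (\<forall>x g. I x g = I x (bneg g))"

definition derivative_dependent :: "('x \<Rightarrow> 'x bfun \<Rightarrow> real) \<Rightarrow> bool" where
  "derivative_dependent I \<longleftrightarrow>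
     (\<forall>x f g. bge (bderiv x f) (bderiv x g) \<longrightarrow> I x f \<ge> I x g)"

definition rank_preserving :: "('x \<Rightarrow> 'x bfun \<Rightarrow> real) \<Rightarrow> bool" where
  "rank_preserving I \<longleftrightarrow> (\<forall>f g x y. modular f g \<and> x \<in> dep g \<and> y \<in> dep g
      \<and> I x g \<ge> I y g \<longrightarrow> I x f \<ge> I y f)"

definition weakly_rank_preserving :: "('x \<Rightarrow> 'x bfun \<Rightarrow> real) \<Rightarrow> bool" where
  "weakly_rank_preserving I \<longleftrightarrow> (\<forall>f g x y. mono_modular f g \<and> x \<in> dep g \<and> y \<in> dep g
      \<and> I x g \<ge> I y g \<longrightarrow> I x f \<ge> I y f)"

definition chain_rule_decomposable :: "('x \<Rightarrow> 'x bfun \<Rightarrow> real) \<Rightarrow> bool" where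
  "chain_rule_decomposable I \<longleftrightarrow> (\<forall>f g x xg. modular f g \<and> x \<in> dep g \<and> xg \<notin> dep f
      \<longrightarrow> I x f = I x g * I xg (gsubst f g xg))"

definition weakly_chain_rule_decomposable :: "('x \<Rightarrow> 'x bfun \<Rightarrow> real) \<Rightarrow> bool" where
  "weakly_chain_rule_decomposable I \<longleftrightarrow> (\<forall>f g x xg. mono_modular f g \<and> x \<in> dep g \<and> xg \<notin> dep f
      \<longrightarrow> I x f = I x g * I xg (gsubst f g xg))"

end

theory Submission
  imports Defs
begin

lemma notin_dep_iff: "x \<notin> dep f \<longleftrightarrow> (\<forall>u b. f (u(x:=b)) = f u)"
proof
  assume "x \<notin> dep f"
  then have e: "\<And>u. f (u(x:=True)) = f (u(x:=False))"
    unfolding dep_def restr_def by (simp add: fun_eq_iff)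
  show "\<forall>u b. f (u(x:=b)) = f u"
  proof (intro allI)
    fix u b
    have "f u = f (u(x := u x))" by simp
    then show "f (u(x:=b)) = f u" using e[of u] by (cases b; cases "u x") auto
  qed
next
  assume "\<forall>u b. f (u(x:=b)) = f u"
  then show "x \<notin> dep f" unfolding dep_def restr_def by (simp add: fun_eq_iff)
qed

lemma notin_dep_deriv: "x \<notin> dep f \<longleftrightarrow> (\<forall>u. \<not> bderiv x f u)"
  unfolding dep_def bderiv_def by (simp add: fun_eq_iff)

lemma agree_aux:
  "finite S \<Longrightarrow> (\<forall>y. y \<notin> S \<longrightarrow> u y = v y) \<Longrightarrow> S \<inter> dep f = {} \<Longrightarrow> f u = f v"
proof (induction S arbitrary: u rule: finite_induct)
  case empty
  then have "u = v" by auto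
  then show ?case by simp
next
  case (insert y S)
  have "\<forall>ya. ya \<notin> S \<longrightarrow> (u(y := v y)) ya = v ya" using insert.prems(1) by auto
  moreover have "S \<inter> dep f = {}" using insert.prems(2) by auto
  ultimately have "f (u(y := v y)) = f v"
    using insert.IH[of "u(y := v y)"] by blast
  moreover have "f (u(y := v y)) = f u"
    using insert.prems(2) notin_dep_iff[of y f] by auto
  ultimately show ?case by simp
qed

lemma agree:
  fixes f :: "'x::finite bfun"
  assumes "\<forall>y\<in>dep f. u y = v y"
  shows "f u = f v"
proof (rule agree_aux[of "{y. u y \<noteq> v y}" u v f])
  show "finite {y. u y \<noteq> v y}" by simp
  show "\<forall>y. y \<notin> {y. u y \<noteq> v y} \<longrightarrow> u y = v y" by blast
  show "{y. u y \<noteq> v y} \<inter> dep f = {}" using assms by blast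
qed

lemma dep_restr:
  assumes "x \<notin> dep l" shows "x \<notin> dep (restr l z c)"
  unfolding notin_dep_iff restr_def
proof (intro allI)
  fix u b
  have H: "\<And>v b. l (v(x:=b)) = l v" using assms unfolding notin_dep_iff by blast
  show "l (u(x := b, z := c)) = l (u(z := c))"
  proof (cases "x = z")
    case True then show ?thesis by simp
  next
    case False
    then have "u(x := b, z := c) = (u(z := c))(x := b)" by (simp add: fun_upd_twist)
    then show ?thesis using H by simp
  qed
qed

lemma dep_restr_z: "z \<notin> dep (restr l z c)"
  unfolding notin_dep_iff restr_def by simp

lemma deriv_bsubst:
  assumes "x \<notin> dep l"
  shows "bderiv x (bsubst l z g) = (\<lambda>u. bderiv x g u \<and> (restr l z True u \<noteq> restr l z False u))"
proof -
  have h: "\<And>u b c. l (u(x:=b, z:=c)) = l (u(z:=c))"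
  proof -
    fix u b c
    show "l (u(x:=b, z:=c)) = l (u(z:=c))"
      using dep_restr[OF assms, of z c] unfolding notin_dep_iff restr_def by blast
  qed
  have r: "\<And>b u. restr (bsubst l z g) x b u =
     (restr g x b u \<and> restr l z True u \<or> \<not> restr g x b u \<and> restr l z False u)"
  proof -
    fix b u
    show "restr (bsubst l z g) x b u =
     (restr g x b u \<and> restr l z True u \<or> \<not> restr g x b u \<and> restr l z False u)"
      by (simp add: h bsubst_def restr_def)
  qed
  show ?thesis
    unfolding bderiv_def r by (auto simp: fun_eq_iff)
qed

lemma rep:
  fixes f g :: "'x::finite bfun"
  assumes w: "modular_wit f g l z" and gv: "g v = c"
  shows "restr l z c u = f (\<lambda>y. if y \<in> dep g then v y else u y)"
proof -
  define w where "w = (\<lambda>y. if y \<in> dep g then v y else u y)"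
  have disj: "dep l \<inter> dep g = {}" using w unfolding modular_wit_def by blast
  have fe: "f = bsubst l z g" using w unfolding modular_wit_def by blast
  have gw: "g w = g v"
  proof (rule agree[of g w v], intro ballI)
    fix y assume "y \<in> dep g"
    then show "w y = v y" unfolding w_def by simp
  qed
  have lw: "restr l z c w = restr l z c u"
  proof (rule agree[of "restr l z c" w u], intro ballI)
    fix y assume "y \<in> dep (restr l z c)"
    then have "y \<in> dep l" using dep_restr[of y l z c] by blast
    then have "y \<notin> dep g" using disj by blast
    then show "w y = u y" unfolding w_def by simp
  qed
  have "f w = restr l z c w" unfolding fe bsubst_def using gw gv by (cases c) simp_all
  then show ?thesis using lw unfolding w_def by simp
qed

lemma exists_val: assumes "\<not> bconst g" shows "\<exists>v. g v = c"
proof (rule ccontr)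
  assume "\<not> (\<exists>v. g v = c)"
  then have "g = (\<lambda>u. \<not> c)" by (auto simp: fun_eq_iff)
  then show False using assms unfolding bconst_def by blast
qed

lemma cof_eq:
  fixes f g :: "'x::finite bfun"
  assumes w: "modular_wit f g l z" and ng: "\<not> bconst g"
  shows "cof f g c = restr l z c"
proof -
  obtain v where gv: "g v = c" using exists_val[OF ng] by blast
  have "\<exists>h. \<exists>l z. modular_wit f g l z \<and> h = restr l z c" using w by blast
  then have "\<exists>l z. modular_wit f g l z \<and> cof f g c = restr l z c"
    unfolding cof_def by (rule someI_ex[where P="\<lambda>h. \<exists>l z. modular_wit f g l z \<and> h = restr l z c"])
  then obtain l' z' where w': "modular_wit f g l' z'" and c: "cof f g c = restr l' z' c" by blast
  show ?thesis unfolding c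
  proof (rule ext)
    fix u
    show "restr l' z' c u = restr l z c u"
      by (simp only: rep[where f=f and g=g and l=l and z=z and v=v and c=c, OF w gv, of u] rep[where f=f and g=g and l=l' and z=z' and v=v and c=c, OF w' gv, of u])
  qed
qed

lemma Fc_indep:
  fixes f g :: "'x::finite bfun"
  assumes w: "modular_wit f g l z" and ng: "\<not> bconst g" and nf: "x \<notin> dep f"
  shows "x \<notin> dep (restr l z c)"
proof (cases "x \<in> dep g")
  case True
  then have "x \<notin> dep l" using w unfolding modular_wit_def by auto
  then show ?thesis by (rule dep_restr)
next
  case False
  obtain v where gv: "g v = c" using exists_val[OF ng] by blast
  define ov where "ov = (\<lambda>u y. if y \<in> dep g then v y else (u::'x\<Rightarrow>bool) y)"
  have ovu: "\<And>u b. ov (u(x:=b)) = (ov u)(x:=b)" using False by (auto simp: ov_def fun_eq_iff)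
  have "\<And>u b. restr l z c (u(x:=b)) = restr l z c u"
  proof -
    fix u b
    have "restr l z c (u(x:=b)) = f (ov (u(x:=b)))" unfolding ov_def by (rule rep[where f=f and g=g and l=l and z=z and v=v and c=c, OF w gv])
    also have "\<dots> = f ((ov u)(x:=b))" by (simp only: ovu)
    also have "\<dots> = f (ov u)" using nf unfolding notin_dep_iff by blast
    also have "\<dots> = restr l z c u" unfolding ov_def by (rule rep[where f=f and g=g and l=l and z=z and v=v and c=c, OF w gv, symmetric])
    finally show "restr l z c (u(x:=b)) = restr l z c u" .
  qed
  then show ?thesis unfolding notin_dep_iff by blast
qed

lemma mono_version:
  fixes f g :: "'x::finite bfun"
  assumes "modular f g"
  obtains f' where "mono_modular f' g" "\<forall>x\<in>dep g. bderiv x f' = bderiv x f"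
    "\<forall>w. w \<notin> dep f \<longrightarrow> w \<notin> dep f' \<and> bderiv w (gsubst f' g w) = bderiv w (gsubst f g w)"
proof -
  obtain l z where w: "modular_wit f g l z" and ng: "\<not> bconst g"
    using assms unfolding modular_def by blast
  have disj: "dep l \<inter> dep g = {}" and fe: "f = bsubst l z g" using w unfolding modular_wit_def by auto
  define K where "K = (\<lambda>u. restr l z True u \<noteq> restr l z False u)"
  define l' where "l' = (\<lambda>u. u z \<and> K u)"
  define f' where "f' = bsubst l' z g"
  have zK: "\<And>u b. K (u(z:=b)) = K u" by (simp add: K_def restr_def)
  have r1: "restr l' z True = K" by (simp add: fun_eq_iff restr_def l'_def zK)
  have r0: "restr l' z False = (\<lambda>u. False)" by (simp add: fun_eq_iff restr_def l'_def)
  have dl': "dep l' \<inter> dep g = {}"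
  proof (cases "z \<in> dep g")
    case True
    then have "z \<notin> dep l" using disj by auto
    then have "restr l z True = restr l z False" unfolding dep_def by simp
    then have "l' = (\<lambda>u. False)" by (simp add: l'_def K_def fun_eq_iff)
    then have "dep l' = {}" by (simp add: dep_def restr_def)
    then show ?thesis by simp
  next
    case False
    show ?thesis
    proof (rule ccontr)
      assume "dep l' \<inter> dep g \<noteq> {}"
      then obtain y where y: "y \<in> dep l'" "y \<in> dep g" by blast
      then have yl: "y \<notin> dep l" "y \<noteq> z" using disj False by auto
      have "\<And>u b c. restr l z c (u(y:=b)) = restr l z c u"
        using dep_restr[OF yl(1)] notin_dep_iff by metis
      then have "\<And>u b. l' (u(y:=b)) = l' u" using yl(2) by (simp add: l'_def K_def)
      then show False using y(1) notin_dep_iff by metis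
    qed
  qed
  have w': "modular_wit f' g l' z" by (simp add: modular_wit_def dl' f'_def)
  have mono: "monotone_in l' z" by (simp add: monotone_in_def bge_def r1 r0)
  have mm: "mono_modular f' g" using w' mono ng by (auto simp: mono_modular_def)
  have c1: "cof f' g True = K" using cof_eq[OF w' ng] r1 by simp
  have c0: "cof f' g False = (\<lambda>u. False)" using cof_eq[OF w' ng] r0 by simp
  have dereq: "bderiv x f' = bderiv x f" if "x \<notin> dep l" "x \<notin> dep l'" for x
    unfolding f'_def fe deriv_bsubst[OF that(1)] deriv_bsubst[OF that(2)] r1 r0
    by (simp add: K_def)
  have p2: "\<forall>x\<in>dep g. bderiv x f' = bderiv x f"
    using dereq disj dl' by blast
  have p3: "w \<notin> dep f' \<and> bderiv w (gsubst f' g w) = bderiv w (gsubst f g w)"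
    if nf: "w \<notin> dep f" for w
  proof
    have i1: "\<And>u b. restr l z True (u(w:=b)) = restr l z True u"
      using Fc_indep[OF w ng nf] unfolding notin_dep_iff by blast
    have i0: "\<And>u b. restr l z False (u(w:=b)) = restr l z False u"
      using Fc_indep[OF w ng nf] unfolding notin_dep_iff by blast
    have iK: "\<And>u b. K (u(w:=b)) = K u" using i1 i0 by (simp add: K_def)
    show "w \<notin> dep f'"
    proof (cases "w \<in> dep g")
      case True
      then have "w \<notin> dep l" "w \<notin> dep l'" using disj dl' by auto
      then have "bderiv w f' = bderiv w f" by (rule dereq)
      then show ?thesis using nf unfolding notin_dep_deriv by simp
    next
      case False
      then have ig: "\<And>u b. g (u(w:=b)) = g u" unfolding notin_dep_iff by blast
      have "f' = (\<lambda>u. g u \<and> K u)" unfolding f'_def bsubst_def r1 r0 by simp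
      then show ?thesis unfolding notin_dep_iff using ig iK by simp
    qed
    show "bderiv w (gsubst f' g w) = bderiv w (gsubst f g w)"
      unfolding bderiv_def gsubst_def c1 c0 cof_eq[OF w ng]
      by (simp add: fun_eq_iff restr_def i1[unfolded restr_def] i0[unfolded restr_def] iK K_def)
  qed
  show ?thesis using that mm p2 p3 by blast
qed

lemma dd_eq:
  assumes "derivative_dependent I" "bderiv x f = bderiv x g"
  shows "I x f = I x g"
  using assms unfolding derivative_dependent_def bge_def by (metis order_antisym)

theorem mainTheorem18:
  fixes I :: "'x::finite \<Rightarrow> 'x bfun \<Rightarrow> real"
  assumes "derivative_dependent I"
  shows "unbiased I
    \<and> ModEC I
    \<and> (weakly_chain_rule_decomposable I \<longrightarrow> chain_rule_decomposable I)
    \<and> (weakly_rank_preserving I \<longrightarrow> rank_preserving I)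
    \<and> (Dic I \<and> Dum I \<longrightarrow> Bound I)"
proof (intro conjI impI)
  show "unbiased I" unfolding unbiased_def
  proof (intro allI)
    fix x :: 'x and g :: "'x bfun"
    have "bderiv x g = bderiv x (bneg g)" by (auto simp: bderiv_def bneg_def restr_def fun_eq_iff)
    then show "I x g = I x (bneg g)" using dd_eq[OF assms] by blast
  qed
next
  show "ModEC I" unfolding ModEC_def
  proof (intro allI impI)
    fix x :: 'x and f g h :: "'x bfun"
    assume a: "mono_modular f g \<and> mono_modular h g \<and> bge (cof f g True) (cof h g True)
       \<and> bge (cof h g False) (cof f g False) \<and> x \<in> dep g"
    obtain l z where w: "modular_wit f g l z" and m: "monotone_in l z" and ng: "\<not> bconst g"
      using a unfolding mono_modular_def by blast
    obtain l2 z2 where w2: "modular_wit h g l2 z2" and m2: "monotone_in l2 z2"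
      using a unfolding mono_modular_def by blast
    have xl: "x \<notin> dep l" "x \<notin> dep l2" using w w2 a unfolding modular_wit_def by auto
    have fe: "f = bsubst l z g" "h = bsubst l2 z2 g" using w w2 unfolding modular_wit_def by auto
    have d1: "bderiv x f = (\<lambda>u. bderiv x g u \<and> (restr l z True u \<noteq> restr l z False u))"
      using fe(1) deriv_bsubst[OF xl(1)] by simp
    have d2: "bderiv x h = (\<lambda>u. bderiv x g u \<and> (restr l2 z2 True u \<noteq> restr l2 z2 False u))"
      using fe(2) deriv_bsubst[OF xl(2)] by simp
    have b1: "bge (restr l z True) (restr l2 z2 True)" and b0: "bge (restr l2 z2 False) (restr l z False)"
      using a unfolding cof_eq[OF w ng] cof_eq[OF w2 ng] by simp_all
    have "bge (bderiv x f) (bderiv x h)"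
      unfolding d1 d2 bge_def
    proof (intro allI impI)
      fix u assume "bderiv x g u \<and> restr l2 z2 True u \<noteq> restr l2 z2 False u"
      moreover have "restr l2 z2 False u \<longrightarrow> restr l2 z2 True u" using m2 unfolding monotone_in_def bge_def by blast
      moreover have "restr l2 z2 True u \<longrightarrow> restr l z True u" using b1 unfolding bge_def by blast
      moreover have "restr l z False u \<longrightarrow> restr l2 z2 False u" using b0 unfolding bge_def by blast
      ultimately show "bderiv x g u \<and> restr l z True u \<noteq> restr l z False u" by blast
    qed
    then show "I x f \<ge> I x h" using assms unfolding derivative_dependent_def by blast
  qed
next
  assume wc: "weakly_chain_rule_decomposable I"
  show "chain_rule_decomposable I" unfolding chain_rule_decomposable_def
  proof (intro allI impI)
    fix f g :: "'x bfun" and x xg :: 'x assume a: "modular f g \<and> x \<in> dep g \<and> xg \<notin> dep f"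
    obtain f' where f': "mono_modular f' g" "\<forall>x\<in>dep g. bderiv x f' = bderiv x f"
      "\<forall>w. w \<notin> dep f \<longrightarrow> w \<notin> dep f' \<and> bderiv w (gsubst f' g w) = bderiv w (gsubst f g w)"
      using mono_version[of f g] a by blast
    have xgf: "xg \<notin> dep f'" "bderiv xg (gsubst f' g xg) = bderiv xg (gsubst f g xg)"
      using f'(3) a by auto
    have "I x f' = I x g * I xg (gsubst f' g xg)" using wc f'(1) a xgf(1)
      unfolding weakly_chain_rule_decomposable_def by blast
    moreover have "I x f' = I x f" using dd_eq[OF assms] f'(2) a by blast
    moreover have "I xg (gsubst f' g xg) = I xg (gsubst f g xg)" using dd_eq[OF assms xgf(2)] .
    ultimately show "I x f = I x g * I xg (gsubst f g xg)" by simp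
  qed
next
  assume wr: "weakly_rank_preserving I"
  show "rank_preserving I" unfolding rank_preserving_def
  proof (intro allI impI)
    fix f g :: "'x bfun" and x y :: 'x assume a: "modular f g \<and> x \<in> dep g \<and> y \<in> dep g \<and> I x g \<ge> I y g"
    obtain f' where f': "mono_modular f' g" "\<forall>x\<in>dep g. bderiv x f' = bderiv x f"
      using mono_version[of f g] a by blast
    have "I x f' \<ge> I y f'" using wr f'(1) a unfolding weakly_rank_preserving_def by blast
    moreover have "I x f' = I x f" "I y f' = I y f" using dd_eq[OF assms] f'(2) a by blast+
    ultimately show "I x f \<ge> I y f" by simp
  qed
next
  assume a: "Dic I \<and> Dum I"
  show "Bound I" unfolding Bound_def
  proof (intro allI conjI)
    fix x :: 'x and f :: "'x bfun"
    have "bderiv x (\<lambda>u. False) = (\<lambda>u. False)" by (simp add: bderiv_def restr_def)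
    then have "I x f \<ge> I x (\<lambda>u. False)" using assms
      unfolding derivative_dependent_def bge_def by simp
    moreover have "x \<notin> dep (\<lambda>u. False)" by (simp add: dep_def restr_def)
    ultimately show "0 \<le> I x f" using a unfolding Dum_def by force
    have "bderiv x (bvar x) = (\<lambda>u. True)" by (simp add: bderiv_def restr_def bvar_def)
    then have "I x (bvar x) \<ge> I x f" using assms
      unfolding derivative_dependent_def bge_def by simp
    then show "I x f \<le> 1" using a unfolding Dic_def by simp
  qed
qed

end
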